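(* Let $(N,v)$ be a balanced game. If the core $C(N,v)$ is a stable set, then the collection $\mathscr{VE}(N,v)$ of strictly vital-exact coalitions is core-describing, i.e., $$C(N,v)=\{x\in X(N,v)\mid x(S)\ge v(S)\ \forall S\in\mathscr{VE}(N,v)\}.$$
   Context: A game $(N,v)$: $N$ finite nonempty, $v:2^N\to\mathbb{R}$, $v(\varnothing)=0$; $x(S)=\sum_{i\in S}x_i$. Preimputations $X(N,v)=\{x\in\mathbb{R}^N\mid x(N)=v(N)\}$; imputations $I(N,v)=\{x\in X(N,v)\mid x_i\ge v(\{i\})\ \forall i\in N\}$. Core: $C(N,v)=\{x\in X(N,v)\mid x(S)\ge v(S)\ \forall S\subseteq N\}$; balanced means nonempty core. For preimputations $x,y$ and a coalition $S$, $x$ dominates $y$ via $S$ if $x(S)\le v(S)$ and $x_i>y_i$ for all $i\in S$; $x$ dominates $y$ if this holds for some coalition $S$. A set $U\subseteq I(N,v)$ is a stable set if (i) no element of $U$ is dominated by an element of $U$, and (ii) every $y\in I(N,v)\setminus U$ is dominated by some $x\in U$. A coalition $S$ is strictly vital-exact if there exists $x\in C(N,v)$ with $x(S)=v(S)$ and $x(T)>v(T)$ for all $T\in 2^S\setminus\{\varnothing,S\}$. *)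

theory Defs
  imports Complex_Main
begin

text \<open>A TU game on the finite nonempty player set N with characteristic function v
  (only values on subsets of N matter; v {} = 0 is an assumption).
  Payoff vectors are functions 'a => real; only their values on N matter.\<close>

definition coal_sum :: "('a \<Rightarrow> real) \<Rightarrow> 'a set \<Rightarrow> real" where
  "coal_sum x S = (\<Sum>i\<in>S. x i)"

definition preimputations :: "'a set \<Rightarrow> ('a set \<Rightarrow> real) \<Rightarrow> ('a \<Rightarrow> real) set" where
  "preimputations N v = {x. coal_sum x N = v N}"

definition imputations :: "'a set \<Rightarrow> ('a set \<Rightarrow> real) \<Rightarrow> ('a \<Rightarrow> real) set" where
  "imputations N v = {x \<in> preimputations N v. \<forall>i\<in>N. x i \<ge> v {i}}"

definition core :: "'a set \<Rightarrow> ('a set \<Rightarrow> real) \<Rightarrow> ('a \<Rightarrow> real) set" where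
  "core N v = {x \<in> preimputations N v. \<forall>S. S \<subseteq> N \<longrightarrow> coal_sum x S \<ge> v S}"

definition balanced :: "'a set \<Rightarrow> ('a set \<Rightarrow> real) \<Rightarrow> bool" where
  "balanced N v \<longleftrightarrow> core N v \<noteq> {}"

definition dominates_via ::
  "'a set \<Rightarrow> ('a set \<Rightarrow> real) \<Rightarrow> ('a \<Rightarrow> real) \<Rightarrow> ('a \<Rightarrow> real) \<Rightarrow> 'a set \<Rightarrow> bool" where
  "dominates_via N v x y S \<longleftrightarrow> coal_sum x S \<le> v S \<and> (\<forall>i\<in>S. x i > y i)"

definition dominates ::
  "'a set \<Rightarrow> ('a set \<Rightarrow> real) \<Rightarrow> ('a \<Rightarrow> real) \<Rightarrow> ('a \<Rightarrow> real) \<Rightarrow> bool" where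
  "dominates N v x y \<longleftrightarrow> (\<exists>S. S \<subseteq> N \<and> S \<noteq> {} \<and> dominates_via N v x y S)"

definition stable_set :: "'a set \<Rightarrow> ('a set \<Rightarrow> real) \<Rightarrow> ('a \<Rightarrow> real) set \<Rightarrow> bool" where
  "stable_set N v U \<longleftrightarrow> U \<subseteq> imputations N v
     \<and> (\<forall>x\<in>U. \<forall>y\<in>U. \<not> dominates N v x y)
     \<and> (\<forall>y \<in> imputations N v - U. \<exists>x\<in>U. dominates N v x y)"

definition strictly_vital_exact :: "'a set \<Rightarrow> ('a set \<Rightarrow> real) \<Rightarrow> 'a set \<Rightarrow> bool" where
  "strictly_vital_exact N v S \<longleftrightarrow> S \<subseteq> N \<and>
     (\<exists>x\<in>core N v. coal_sum x S = v S \<and>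
        (\<forall>T. T \<subseteq> S \<and> T \<noteq> {} \<and> T \<noteq> S \<longrightarrow> coal_sum x T > v T))"

definition VE :: "'a set \<Rightarrow> ('a set \<Rightarrow> real) \<Rightarrow> 'a set set" where
  "VE N v = {S. strictly_vital_exact N v S}"

end

theory Submission
  imports Defs
begin

lemma cs_comb: "coal_sum (\<lambda>i. (1-t)*z i + t*y i) S = (1-t)*coal_sum z S + t*coal_sum y S"
  unfolding coal_sum_def by (simp add: sum.distrib sum_distrib_left)

lemma cs_single: "coal_sum x {i} = x i"
  unfolding coal_sum_def by simp

lemma conv_ge: "(a::real) \<ge> c \<Longrightarrow> b \<ge> c \<Longrightarrow> 0 \<le> t \<Longrightarrow> t \<le> 1 \<Longrightarrow> (1-t)*a + t*b \<ge> c"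
proof -
  assume "a \<ge> c" "b \<ge> c" "0 \<le> t" "t \<le> 1"
  then have "(1-t)*a \<ge> (1-t)*c" "t*b \<ge> t*c" by (auto intro: mult_left_mono)
  then show ?thesis by (simp add: algebra_simps)
qed

lemma min_T:
  assumes "finite S" and "T0 \<subseteq> S" "T0 \<noteq> {}" "coal_sum x T0 \<le> v T0"
  shows "\<exists>T. T \<subseteq> S \<and> T \<noteq> {} \<and> coal_sum x T \<le> v T \<and>
     (\<forall>T'. T' \<subset> T \<and> T' \<noteq> {} \<longrightarrow> \<not> coal_sum x T' \<le> v T')"
proof -
  let ?P = "\<lambda>n. \<exists>T. T \<subseteq> S \<and> T \<noteq> {} \<and> coal_sum x T \<le> v T \<and> card T = n"
  have "?P (card T0)" using assms by blast
  define n where "n = (LEAST n. ?P n)"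
  have n: "?P n" unfolding n_def by (rule LeastI) fact
  have nmin: "\<And>m. ?P m \<Longrightarrow> n \<le> m" unfolding n_def by (rule Least_le)
  from n obtain T where T: "T \<subseteq> S" "T \<noteq> {}" "coal_sum x T \<le> v T" "card T = n" by blast
  have "\<not> coal_sum x T' \<le> v T'" if "T' \<subset> T" "T' \<noteq> {}" for T'
  proof
    assume h: "coal_sum x T' \<le> v T'"
    have "finite T" using T assms(1) finite_subset by blast
    then have "card T' < card T" using that psubset_card_mono by blast
    moreover have "?P (card T')" using h that T by blast
    then have "n \<le> card T'" by (rule nmin)
    ultimately show False using T(4) by simp
  qed
  then show ?thesis using T by blast
qed

theorem proposition7p2:
  fixes N :: "'a set" and v :: "'a set \<Rightarrow> real"
  assumes "finite N" and "N \<noteq> {}" and "v {} = 0"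
    and "balanced N v"
    and "stable_set N v (core N v)"
  shows "core N v = {x \<in> preimputations N v. \<forall>S\<in>VE N v. coal_sum x S \<ge> v S}"
proof
  show "core N v \<subseteq> {x \<in> preimputations N v. \<forall>S\<in>VE N v. coal_sum x S \<ge> v S}"
  proof
    fix x assume x: "x \<in> core N v"
    then have "x \<in> preimputations N v" unfolding core_def by blast
    moreover have "\<forall>S\<in>VE N v. coal_sum x S \<ge> v S"
    proof
      fix S assume "S \<in> VE N v"
      then have "S \<subseteq> N" unfolding VE_def strictly_vital_exact_def by blast
      then show "coal_sum x S \<ge> v S" using x unfolding core_def by blast
    qed
    ultimately show "x \<in> {x \<in> preimputations N v. \<forall>S\<in>VE N v. coal_sum x S \<ge> v S}" by blast
  qed
next
  show "{x \<in> preimputations N v. \<forall>S\<in>VE N v. coal_sum x S \<ge> v S} \<subseteq> core N v"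
  proof
    fix y assume "y \<in> {x \<in> preimputations N v. \<forall>S\<in>VE N v. coal_sum x S \<ge> v S}"
    then have yX: "coal_sum y N = v N" and yVE: "\<And>S. S \<in> VE N v \<Longrightarrow> coal_sum y S \<ge> v S"
      unfolding preimputations_def by auto
    show "y \<in> core N v"
    proof (rule ccontr)
      assume ync: "y \<notin> core N v"
      obtain z where z: "z \<in> core N v" using assms(4) unfolding balanced_def by blast
      have zX: "coal_sum z N = v N" and zS: "\<And>S. S \<subseteq> N \<Longrightarrow> coal_sum z S \<ge> v S"
        using z unfolding core_def preimputations_def by auto
      define w where "w = (\<lambda>t::real. \<lambda>i. (1-t)*z i + t*y i)"
      have wcs: "coal_sum (w t) S = (1-t)*coal_sum z S + t*coal_sum y S" for t S
        unfolding w_def by (rule cs_comb)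
      have wX: "w t \<in> preimputations N v" for t
        unfolding preimputations_def using wcs[of t N] yX zX by (simp add: algebra_simps)
      define Bad where "Bad = {S. S \<subseteq> N \<and> coal_sum y S < v S}"
      have finBad: "finite Bad" unfolding Bad_def using assms(1) by simp
      have Badne: "Bad \<noteq> {}" using ync yX unfolding Bad_def core_def preimputations_def by auto
      define r where "r = (\<lambda>S. (coal_sum z S - v S) / (coal_sum z S - coal_sum y S))"
      define ts where "ts = Min (r ` Bad)"
      obtain S1 where S1: "S1 \<in> Bad" "ts = r S1"
      proof -
        have "ts \<in> r ` Bad" unfolding ts_def using finBad Badne by (intro Min_in) auto
        then show ?thesis using that by blast
      qed
      have rprop: "0 \<le> r S \<and> r S < 1 \<and> coal_sum z S - coal_sum y S > 0" if "S \<in> Bad" for S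
      proof -
        have a: "coal_sum z S \<ge> v S" "coal_sum y S < v S" using that zS unfolding Bad_def by auto
        then have d: "coal_sum z S - coal_sum y S > 0" by simp
        have "r S < 1" unfolding r_def using a d by (simp add: divide_less_eq)
        moreover have "0 \<le> r S" unfolding r_def using a d by simp
        ultimately show ?thesis using d by simp
      qed
      have ts01: "0 \<le> ts" "ts < 1" using rprop[OF S1(1)] S1 by auto
      have tsle: "ts \<le> r S" if "S \<in> Bad" for S
        unfolding ts_def using finBad that by simp
      have wcore: "w ts \<in> core N v"
      proof -
        have "coal_sum (w ts) S \<ge> v S" if "S \<subseteq> N" for S
        proof (cases "S \<in> Bad")
          case True
          have d: "coal_sum z S - coal_sum y S > 0" using rprop[OF True] by simp
          have "ts * (coal_sum z S - coal_sum y S) \<le> coal_sum z S - v S"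
            using tsle[OF True] d unfolding r_def by (simp add: le_divide_eq)
          then show ?thesis unfolding wcs by (simp add: algebra_simps)
        next
          case False
          then have "coal_sum y S \<ge> v S" using that unfolding Bad_def by auto
          then show ?thesis unfolding wcs using zS[OF that] ts01
            conv_ge[where a="coal_sum z S" and b="coal_sum y S" and c="v S" and t=ts] by auto
        qed
        then show ?thesis using wX unfolding core_def by auto
      qed
      have wnc: "w t \<notin> core N v" if "t > ts" for t
      proof
        assume "w t \<in> core N v"
        then have "coal_sum (w t) S1 \<ge> v S1" using S1(1) unfolding core_def Bad_def by auto
        moreover have d: "coal_sum z S1 - coal_sum y S1 > 0" using rprop[OF S1(1)] by simp
        moreover have "r S1 < t" using that S1 by simp
        then have "coal_sum z S1 - v S1 < t * (coal_sum z S1 - coal_sum y S1)"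
          using d unfolding r_def by (simp add: divide_less_eq)
        ultimately show False unfolding wcs by (simp add: algebra_simps)
      qed
      define Bi where "Bi = {i\<in>N. y i < v {i}}"
      have wtsi: "w ts i > v {i}" if "i \<in> Bi" for i
      proof -
        have iN: "i \<in> N" and yi: "y i < v {i}" using that unfolding Bi_def by auto
        have ge: "w ts i \<ge> v {i}" using wcore iN unfolding core_def
          by (auto simp: cs_single)
        show ?thesis
        proof (rule ccontr)
          assume "\<not> w ts i > v {i}"
          then have eq: "coal_sum (w ts) {i} = v {i}" using ge by (simp add: cs_single)
          have "strictly_vital_exact N v {i}"
            unfolding strictly_vital_exact_def
          proof (intro conjI bexI[of _ "w ts"])
            show "{i} \<subseteq> N" using iN by simp
            show "coal_sum (w ts) {i} = v {i}" by (rule eq)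
            show "\<forall>T. T \<subseteq> {i} \<and> T \<noteq> {} \<and> T \<noteq> {i} \<longrightarrow> v T < coal_sum (w ts) T"
              by (metis subset_singletonD)
          qed (rule wcore)
          then have "coal_sum y {i} \<ge> v {i}" using yVE unfolding VE_def by auto
          then show False using yi by (simp add: cs_single)
        qed
      qed
      define rho where "rho = (\<lambda>i. (z i - v {i}) / (z i - y i))"
      have rhoprop: "ts < rho i \<and> z i - y i > 0" if "i \<in> Bi" for i
      proof -
        have zi: "z i \<ge> v {i}" using zS[of "{i}"] that unfolding Bi_def by (auto simp: cs_single)
        have yi: "y i < v {i}" using that unfolding Bi_def by auto
        have d: "z i - y i > 0" using zi yi by simp
        have "ts * (z i - y i) < z i - v {i}" using wtsi[OF that] unfolding w_def
          by (simp add: algebra_simps)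
        then show ?thesis using d unfolding rho_def by (simp add: less_divide_eq)
      qed
      have finBi: "finite Bi" unfolding Bi_def using assms(1) by simp
      define t where "t = Min (insert 1 (rho ` Bi))"
      have tgt: "t > ts"
      proof -
        have "\<forall>a\<in>insert 1 (rho ` Bi). ts < a" using ts01 rhoprop by auto
        then show ?thesis unfolding t_def using finBi
          by (metis Min_in finite_imageI finite_insert insert_not_empty)
      qed
      have tle1: "t \<le> 1" unfolding t_def using finBi by simp
      have t0: "0 \<le> t" using tgt ts01 by simp
      have wimp: "w t \<in> imputations N v"
      proof -
        have "w t i \<ge> v {i}" if iN: "i \<in> N" for i
        proof (cases "i \<in> Bi")
          case True
          have "t \<le> rho i" unfolding t_def using finBi True by simp
          then have "t * (z i - y i) \<le> z i - v {i}" using rhoprop[OF True]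
            unfolding rho_def by (simp add: le_divide_eq)
          then show ?thesis unfolding w_def by (simp add: algebra_simps)
        next
          case False
          then have "y i \<ge> v {i}" using iN unfolding Bi_def by auto
          moreover have "z i \<ge> v {i}" using zS[of "{i}"] iN by (auto simp: cs_single)
          ultimately show ?thesis unfolding w_def using t0 tle1
            conv_ge[where a="z i" and b="y i" and c="v {i}" and t=t] by auto
        qed
        then show ?thesis using wX unfolding imputations_def by auto
      qed
      have "w t \<notin> core N v" using wnc tgt by simp
      then have wd: "w t \<in> imputations N v - core N v" using wimp by simp
      have stab: "\<forall>y\<in>imputations N v - core N v. \<exists>x\<in>core N v. dominates N v x y"
        using assms(5) unfolding stable_set_def by (elim conjE)
      obtain x where x: "x \<in> core N v" and dom: "dominates N v x (w t)"
        using bspec[OF stab wd] by (elim bexE)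
      then obtain S where S: "S \<subseteq> N" "S \<noteq> {}" "coal_sum x S \<le> v S" "\<forall>i\<in>S. x i > w t i"
        unfolding dominates_def dominates_via_def by blast
      have finS: "finite S" using S(1) assms(1) finite_subset by blast
      obtain T where T: "T \<subseteq> S" "T \<noteq> {}" "coal_sum x T \<le> v T"
        "\<forall>T'. T' \<subset> T \<and> T' \<noteq> {} \<longrightarrow> \<not> coal_sum x T' \<le> v T'"
        using min_T[of S S x v] finS S(2,3) by blast
      have TN: "T \<subseteq> N" using T S by blast
      have xcore: "\<And>S. S \<subseteq> N \<Longrightarrow> coal_sum x S \<ge> v S" using x unfolding core_def by blast
      have xT: "coal_sum x T = v T" using xcore[OF TN] T(3) by simp
      have "strictly_vital_exact N v T"
        unfolding strictly_vital_exact_def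
      proof (intro conjI bexI[of _ x] allI impI)
        show "T \<subseteq> N" by (rule TN)
        show "coal_sum x T = v T" by (rule xT)
        show "x \<in> core N v" by (rule x)
        fix T' assume h: "T' \<subseteq> T \<and> T' \<noteq> {} \<and> T' \<noteq> T"
        then have "T' \<subset> T" "T' \<noteq> {}" by auto
        then have "\<not> coal_sum x T' \<le> v T'" using T(4) by blast
        then show "v T' < coal_sum x T'" by simp
      qed
      then have yT: "coal_sum y T \<ge> v T" using yVE unfolding VE_def by auto
      have "coal_sum (w t) T \<ge> v T" unfolding wcs using zS[OF TN] yT t0 tle1
        conv_ge[where a="coal_sum z T" and b="coal_sum y T" and c="v T" and t=t] by auto
      moreover have "coal_sum (w t) T < coal_sum x T"
        unfolding coal_sum_def
        using T(1,2) S(4) finS finite_subset[OF T(1) finS]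
        by (intro sum_strict_mono) auto
      ultimately show False using xT by simp
    qed
  qed
qed

end
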